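(* Let $\mathrm{GL}_3(\mathbb R)$ act by conjugation on $\mathfrak{sl}_3(\mathbb R)$ and let $\mathfrak s_{\mathbb R}:=\left\{A=\begin{pmatrix} a&1&0\\ b&a&c\\ d&0&-2a\end{pmatrix}: a,b,c,d\in\mathbb R\right\}$ (so $a=A_{11},b=A_{21},c=A_{23},d=A_{31}$). Then the $C^\infty(\mathfrak s_{\mathbb R})$-module of vector fields on $\mathfrak s_{\mathbb R}$ strongly tangential to this action is generated by the four vector fields $v_1=c\,\partial_c-d\,\partial_d$, $v_2=-a\,v_1$, $v_3=\tfrac d2\partial_a-3ad\,\partial_b+(9a^2-b)\partial_c$, $v_4=-\tfrac c2\partial_a+3ac\,\partial_b+(b-9a^2)\partial_d$.
   Context: Strongly tangential vector fields: let a Lie group $G$ with Lie algebra $\mathfrak g$ act on a manifold $X$ and let $S\subset X$ be a locally closed submanifold. For a smooth map $\varphi:S\to\mathfrak g$ define $\alpha_\varphi(s):=d_e(a_s)(\varphi(s))\in T_sX$, where $a_s:G\to X$, $g\mapsto gs$ (here $a_s(g)=gsg^{-1}$, so $\alpha_\varphi(s)=[\varphi(s),s]$). If $\alpha_\varphi(s)\in T_sS$ for all $s\in S$, the vector field $\alpha_\varphi$ on $S$ is called strongly tangential to the action of $G$. *)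

theory Defs
  imports "HOL-Analysis.Analysis"
begin

fun Ck :: "nat \<Rightarrow> ('a::euclidean_space \<Rightarrow> 'b::real_normed_vector) \<Rightarrow> bool" where
  "Ck 0 f = continuous_on UNIV f"
| "Ck (Suc k) f = (\<exists>f'. (\<forall>x. (f has_derivative f' x) (at x)) \<and> (\<forall>v. Ck k (\<lambda>x. f' x v)))"

definition smooth :: "('a::euclidean_space \<Rightarrow> 'b::real_normed_vector) \<Rightarrow> bool" where
  "smooth f \<longleftrightarrow> (\<forall>k. Ck k f)"

definition sR :: "real^4 \<Rightarrow> real^3^3" where
  "sR p = (let a = p$1; b = p$2; c = p$3; d = p$4 in
     vector [vector [a, 1, 0], vector [b, a, c], vector [d, 0, -2*a]])"

text \<open>alpha_phi(s) = [phi(s), s] (infinitesimal conjugation action of gl_3).\<close>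
definition alpha :: "(real^4 \<Rightarrow> real^3^3) \<Rightarrow> real^4 \<Rightarrow> real^3^3" where
  "alpha \<phi> p = \<phi> p ** sR p - sR p ** \<phi> p"

definition sR_tangent :: "(real^3^3) set" where
  "sR_tangent = {M. M$1$2 = 0 \<and> M$1$3 = 0 \<and> M$3$2 = 0 \<and> M$2$2 = M$1$1 \<and> M$3$3 = -2 * M$1$1}"

text \<open>Coordinates of a tangent vector w.r.t. d/da, d/db, d/dc, d/dd.\<close>
definition tcoords :: "real^3^3 \<Rightarrow> real^4" where
  "tcoords M = vector [M$1$1, M$2$1, M$2$3, M$3$1]"

definition strongly_tangential :: "(real^4 \<Rightarrow> real^4) set" where
  "strongly_tangential = {V. \<exists>\<phi>. smooth \<phi> \<and> (\<forall>p. alpha \<phi> p \<in> sR_tangent)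
                                 \<and> (\<forall>p. V p = tcoords (alpha \<phi> p))}"

definition v1 :: "real^4 \<Rightarrow> real^4" where
  "v1 p = vector [0, 0, p$3, - p$4]"
definition v2 :: "real^4 \<Rightarrow> real^4" where
  "v2 p = (- p$1) *\<^sub>R v1 p"
definition v3 :: "real^4 \<Rightarrow> real^4" where
  "v3 p = vector [p$4 / 2, -3 * p$1 * p$4, 9 * p$1^2 - p$2, 0]"
definition v4 :: "real^4 \<Rightarrow> real^4" where
  "v4 p = vector [- p$3 / 2, 3 * p$1 * p$3, 0, p$2 - 9 * p$1^2]"

end

theory Submission
  imports Defs
begin
lemma bl_axis: "bounded_linear (axis i :: 'b::real_normed_vector \<Rightarrow> 'b^'n)"
proof (rule bounded_linear_intro[where K=1])
  fix x y :: 'b and r :: real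
  show "axis i (x + y) = (axis i x + axis i y :: 'b^'n)" by (simp add: axis_def vec_eq_iff)
  show "axis i (r *\<^sub>R x) = (r *\<^sub>R axis i x :: 'b^'n)" by (simp add: axis_def vec_eq_iff)
  have "(\<Sum>j\<in>UNIV. (norm ((axis i x :: 'b^'n) $ j))^2) = (\<Sum>j\<in>UNIV. if j = i then (norm x)^2 else 0)"
    by (rule sum.cong) (auto simp: axis_def)
  also have "\<dots> = (norm x)^2" by simp
  finally have "norm (axis i x :: 'b^'n) = norm x"
    unfolding norm_vec_def L2_set_def by simp
  then show "norm (axis i x :: 'b^'n) \<le> norm x * 1" by simp
qed
lemma vec_sum_axis: "(x::'b::real_normed_vector^'n) = (\<Sum>i\<in>UNIV. axis i (x$i))"
proof -
  have "\<And>j. (\<Sum>i\<in>UNIV. axis i (x$i)) $ j = x $ j"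
  proof -
    fix j
    have "(\<Sum>i\<in>UNIV. axis i (x$i)) $ j = (\<Sum>i\<in>UNIV. if i = j then x$j else 0)"
      unfolding sum_component by (rule sum.cong) (auto simp: axis_def)
    then show "(\<Sum>i\<in>UNIV. axis i (x$i)) $ j = x $ j" by simp
  qed
  then show ?thesis by (simp add: vec_eq_iff)
qed
lemma CkI: "(\<forall>x. (f has_derivative D x) (at x)) \<Longrightarrow> (\<forall>v. Ck k (\<lambda>x. D x v)) \<Longrightarrow> Ck (Suc k) f"
  by (simp only: Ck.simps) (rule exI[of _ D], rule conjI)

lemma Ck_cont: "Ck k f \<Longrightarrow> continuous_on UNIV f"
proof (cases k)
  case (Suc n)
  assume "Ck k f"
  then obtain f' where "\<forall>x. (f has_derivative f' x) (at x)" using Suc by auto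
  then show ?thesis
    by (meson continuous_at_imp_continuous_on has_derivative_continuous)
qed simp

lemma Ck_mono: "Ck (Suc k) f \<Longrightarrow> Ck k f"
proof (induction k arbitrary: f)
  case 0 then show ?case using Ck_cont[OF "0.prems"] by simp
next
  case (Suc k)
  then obtain f' where "\<forall>x. (f has_derivative f' x) (at x)" "\<forall>v. Ck (Suc k) (\<lambda>x. f' x v)"
    by auto
  with Suc.IH show ?case by auto
qed

lemma Ck_linear: "bounded_linear L \<Longrightarrow> Ck k f \<Longrightarrow> Ck k (\<lambda>x. L (f x))"
proof (induction k arbitrary: f)
  case 0 then show ?case
    using continuous_on_compose[of UNIV f L] linear_continuous_on[of L]
    by (auto simp: o_def intro: continuous_on_subset)
next
  case (Suc k)
  then obtain f' where d: "\<forall>x. (f has_derivative f' x) (at x)" and c: "\<forall>v. Ck k (\<lambda>x. f' x v)"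
    by auto
  have "\<forall>x. ((\<lambda>x. L (f x)) has_derivative (\<lambda>h. L (f' x h))) (at x)"
    using d bounded_linear.has_derivative[OF Suc.prems(1)] by blast
  moreover have "\<forall>v. Ck k (\<lambda>x. L (f' x v))" using c Suc.IH Suc.prems(1) by blast
  ultimately show ?case by (rule CkI)
qed

lemma Ck_const: "Ck k (\<lambda>x. c)"
proof (induction k arbitrary: c)
  case 0 then show ?case by simp
next
  case (Suc k)
  have "\<forall>x. ((\<lambda>x. c) has_derivative (\<lambda>h. 0)) (at x)" by simp
  then show ?case using Suc.IH by (intro CkI[where D="\<lambda>x h. 0"]) auto
qed

lemma Ck_id: "Ck k (\<lambda>x. x)"
proof (cases k)
  case (Suc n)
  have "\<forall>x. ((\<lambda>x. x) has_derivative (\<lambda>h. h)) (at x)" by simp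
  have "Ck (Suc n) (\<lambda>x. x)" by (rule CkI[of _ "\<lambda>x h. h"]) (auto simp: Ck_const)
  then show ?thesis using Suc by simp
qed (simp add: continuous_on_id)

lemma Ck_add: "Ck k f \<Longrightarrow> Ck k g \<Longrightarrow> Ck k (\<lambda>x. f x + g x)"
proof (induction k arbitrary: f g)
  case 0 then show ?case by (simp add: continuous_on_add)
next
  case (Suc k)
  then obtain f' g' where d: "\<forall>x. (f has_derivative f' x) (at x)" "\<forall>x. (g has_derivative g' x) (at x)"
    and c: "\<forall>v. Ck k (\<lambda>x. f' x v)" "\<forall>v. Ck k (\<lambda>x. g' x v)"
    by auto
  have "\<forall>x. ((\<lambda>x. f x + g x) has_derivative (\<lambda>h. f' x h + g' x h)) (at x)"
    using d by (auto intro: has_derivative_add)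
  moreover have "\<forall>v. Ck k (\<lambda>x. f' x v + g' x v)"
    using c by (auto intro: Suc.IH)
  ultimately show ?case by (rule CkI)
qed

lemma Ck_mult: "Ck k f \<Longrightarrow> Ck k g \<Longrightarrow> Ck k (\<lambda>x. f x * g x :: real)"
proof (induction k arbitrary: f g)
  case 0 then show ?case by (simp add: continuous_on_mult)
next
  case (Suc k)
  then obtain f' g' where d: "\<forall>x. (f has_derivative f' x) (at x)" "\<forall>x. (g has_derivative g' x) (at x)"
    and c: "\<forall>v. Ck k (\<lambda>x. f' x v)" "\<forall>v. Ck k (\<lambda>x. g' x v)"
    by auto
  have fk: "Ck k f" "Ck k g" using Suc.prems Ck_mono by auto
  have "\<forall>x. ((\<lambda>x. f x * g x) has_derivative (\<lambda>h. f x * g' x h + f' x h * g x)) (at x)"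
    using d by (auto intro: has_derivative_mult)
  moreover have "Ck k (\<lambda>x. f x * g' x v + f' x v * g x)" for v
    by (rule Ck_add[OF Suc.IH[OF fk(1) c(2)[rule_format]] Suc.IH[OF c(1)[rule_format] fk(2)]])
  then have "\<forall>v. Ck k (\<lambda>x. f x * g' x v + f' x v * g x)" by blast
  ultimately show ?case by (rule CkI)
qed

lemma Ck_sum: "finite S \<Longrightarrow> (\<And>i. i \<in> S \<Longrightarrow> Ck k (g i)) \<Longrightarrow> Ck k (\<lambda>x. \<Sum>i\<in>S. g i x)"
proof (induction S rule: finite_induct)
  case empty then show ?case by (simp add: Ck_const)
next
  case (insert a S)
  have "Ck k (\<lambda>x. g a x + (\<Sum>i\<in>S. g i x))"
    by (rule Ck_add) (use insert in auto)
  then show ?case using insert(1,2) by simp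
qed

lemma Ck_vec: "(\<And>i. Ck k (\<lambda>x. f x $ i)) \<Longrightarrow> Ck k (f :: 'a::euclidean_space \<Rightarrow> 'b::real_normed_vector^'n)"
proof -
  assume a: "\<And>i. Ck k (\<lambda>x. f x $ i)"
  have "Ck k (\<lambda>x. \<Sum>i\<in>UNIV. axis i (f x $ i))"
    by (rule Ck_sum) (simp, rule Ck_linear[OF bl_axis a])
  moreover have "(\<lambda>x. \<Sum>i\<in>UNIV. axis i (f x $ i)) = f"
    by (rule ext, rule vec_sum_axis[symmetric])
  ultimately show ?thesis by (simp only:)
qed

lemma Ck_nth: "Ck k f \<Longrightarrow> Ck k (\<lambda>x. f x $ i)"
  by (rule Ck_linear[OF bounded_linear_vec_nth])

lemma Ck_minus: "Ck k f \<Longrightarrow> Ck k (\<lambda>x. - f x)"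
  by (rule Ck_linear[OF bounded_linear_minus[OF bounded_linear_ident]])

lemma Ck_diff: "Ck k f \<Longrightarrow> Ck k g \<Longrightarrow> Ck k (\<lambda>x. f x - g x)"
  using Ck_add[OF _ Ck_minus, of k f g] by simp

lemma Ck_divc: "Ck k f \<Longrightarrow> Ck k (\<lambda>x. f x / (c::real))"
  using Ck_mult[OF _ Ck_const, of k f "1/c"] by simp
lemma v4e: "(vector [a,b,c,d] :: 'a::zero^4)$1 = a" "(vector [a,b,c,d] :: 'a::zero^4)$2 = b"
  "(vector [a,b,c,d] :: 'a::zero^4)$3 = c" "(vector [a,b,c,d] :: 'a::zero^4)$4 = d"
  by (simp_all add: vector_def)
lemma sRe: "sR p $1$1 = p$1" "sR p $1$2 = 1" "sR p $1$3 = 0"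
 "sR p $2$1 = p$2" "sR p $2$2 = p$1" "sR p $2$3 = p$3"
 "sR p $3$1 = p$4" "sR p $3$2 = 0" "sR p $3$3 = -2*p$1"
  by (simp_all add: sR_def Let_def)

lemma alpha_m:
  fixes \<phi> p
  defines "x \<equiv> \<lambda>i j. \<phi> p $ i $ j"
  shows "alpha \<phi> p $ 1 $ 1 = p$2 * x 1 2 + p$4 * x 1 3 - x 2 1"
   "alpha \<phi> p $ 1 $ 2 = x 1 1 - x 2 2"
   "alpha \<phi> p $ 1 $ 3 = p$3 * x 1 2 - 3 * p$1 * x 1 3 - x 2 3"
   "alpha \<phi> p $ 2 $ 1 = p$2 * (x 2 2 - x 1 1) + p$4 * x 2 3 - p$3 * x 3 1"
   "alpha \<phi> p $ 2 $ 2 = x 2 1 - p$2 * x 1 2 - p$3 * x 3 2"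
   "alpha \<phi> p $ 2 $ 3 = p$3 * (x 2 2 - x 3 3) - 3 * p$1 * x 2 3 - p$2 * x 1 3"
   "alpha \<phi> p $ 3 $ 1 = 3 * p$1 * x 3 1 + p$2 * x 3 2 + p$4 * (x 3 3 - x 1 1)"
   "alpha \<phi> p $ 3 $ 2 = x 3 1 + 3 * p$1 * x 3 2 - p$4 * x 1 2"
   "alpha \<phi> p $ 3 $ 3 = p$3 * x 3 2 - p$4 * x 1 3"
proof -
  have e: "alpha \<phi> p $ i $ j = (\<Sum>k\<in>UNIV. x i k * sR p $ k $ j) - (\<Sum>k\<in>UNIV. sR p $ i $ k * x k j)" for i j
    by (simp add: alpha_def matrix_matrix_mult_def x_def)
  show "alpha \<phi> p $ 1 $ 1 = p$2 * x 1 2 + p$4 * x 1 3 - x 2 1"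
   "alpha \<phi> p $ 1 $ 2 = x 1 1 - x 2 2"
   "alpha \<phi> p $ 1 $ 3 = p$3 * x 1 2 - 3 * p$1 * x 1 3 - x 2 3"
   "alpha \<phi> p $ 2 $ 1 = p$2 * (x 2 2 - x 1 1) + p$4 * x 2 3 - p$3 * x 3 1"
   "alpha \<phi> p $ 2 $ 2 = x 2 1 - p$2 * x 1 2 - p$3 * x 3 2"
   "alpha \<phi> p $ 2 $ 3 = p$3 * (x 2 2 - x 3 3) - 3 * p$1 * x 2 3 - p$2 * x 1 3"
   "alpha \<phi> p $ 3 $ 1 = 3 * p$1 * x 3 1 + p$2 * x 3 2 + p$4 * (x 3 3 - x 1 1)"
   "alpha \<phi> p $ 3 $ 2 = x 3 1 + 3 * p$1 * x 3 2 - p$4 * x 1 2"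
   "alpha \<phi> p $ 3 $ 3 = p$3 * x 3 2 - p$4 * x 1 3"
    by (simp_all add: e sum_3 sRe algebra_simps)
qed

lemma fwd:
  assumes "alpha \<phi> p \<in> sR_tangent"
  shows "tcoords (alpha \<phi> p) = (\<phi> p$1$1 - \<phi> p$3$3) *\<^sub>R v1 p + (3 * \<phi> p$1$2) *\<^sub>R v2 p
     + (\<phi> p$1$3) *\<^sub>R v3 p + (\<phi> p$3$2) *\<^sub>R v4 p"
proof -
  let ?x = "\<lambda>i j. \<phi> p $ i $ j"
  note m = alpha_m[of \<phi> p]
  from assms have t: "alpha \<phi> p $ 1 $ 2 = 0" "alpha \<phi> p $ 1 $ 3 = 0" "alpha \<phi> p $ 3 $ 2 = 0"
     "alpha \<phi> p $ 2 $ 2 = alpha \<phi> p $ 1 $ 1"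
    unfolding sR_tangent_def by simp_all
  have s22: "?x 2 2 = ?x 1 1" using t(1) m(2) by simp
  have s23: "?x 2 3 = p$3 * ?x 1 2 - 3 * p$1 * ?x 1 3" using t(2) m(3) by simp
  have s31: "?x 3 1 = p$4 * ?x 1 2 - 3 * p$1 * ?x 3 2" using t(3) m(8) by simp
  have s21: "?x 2 1 = p$2 * ?x 1 2 + (p$3 * ?x 3 2 + p$4 * ?x 1 3) / 2" using t(4) m(1) m(5) by (simp add: field_simps)
  have c1: "alpha \<phi> p $ 1 $ 1 = (p$4 * ?x 1 3 - p$3 * ?x 3 2) / 2"
    unfolding m(1) s21 by (simp add: field_simps)
  have c2: "alpha \<phi> p $ 2 $ 1 = -3 * p$1 * p$4 * ?x 1 3 + 3 * p$1 * p$3 * ?x 3 2"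
    unfolding m(4) s22 s23 s31 by (simp add: algebra_simps)
  have c3: "alpha \<phi> p $ 2 $ 3 = p$3 * (?x 1 1 - ?x 3 3) - 3 * p$1 * p$3 * ?x 1 2 + (9 * p$1^2 - p$2) * ?x 1 3"
    unfolding m(6) s22 s23 by (simp add: algebra_simps power2_eq_square)
  have c4: "alpha \<phi> p $ 3 $ 1 = 3 * p$1 * p$4 * ?x 1 2 + (p$2 - 9 * p$1^2) * ?x 3 2 - p$4 * (?x 1 1 - ?x 3 3)"
    unfolding m(7) s31 by (simp add: algebra_simps power2_eq_square)
  show ?thesis
    unfolding vec_eq_iff forall_4 tcoords_def v1_def v2_def v3_def v4_def
    by (simp add: v4e c1 c2 c3 c4 field_simps)
qed
definition Phi :: "(real^4 \<Rightarrow> real) \<Rightarrow> (real^4 \<Rightarrow> real) \<Rightarrow> (real^4 \<Rightarrow> real) \<Rightarrow> (real^4 \<Rightarrow> real) \<Rightarrow> real^4 \<Rightarrow> real^3^3" where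
  "Phi f1 f2 f3 f4 p = vector [vector [f1 p, f2 p / 3, f3 p],
     vector [p$2 * (f2 p / 3) + (p$3 * f4 p + p$4 * f3 p) / 2, f1 p, p$3 * (f2 p / 3) - 3 * p$1 * f3 p],
     vector [p$4 * (f2 p / 3) - 3 * p$1 * f4 p, f4 p, 0]]"

lemma Phi_tan: "alpha (Phi f1 f2 f3 f4) p \<in> sR_tangent"
  unfolding sR_tangent_def by (simp add: alpha_m Phi_def field_simps)

lemma Phi_eq: "tcoords (alpha (Phi f1 f2 f3 f4) p) = f1 p *\<^sub>R v1 p + f2 p *\<^sub>R v2 p + f3 p *\<^sub>R v3 p + f4 p *\<^sub>R v4 p"
  using fwd[OF Phi_tan, of f1 f2 f3 f4 p] by (simp add: Phi_def)

lemma Phi_smooth: "smooth f1 \<Longrightarrow> smooth f2 \<Longrightarrow> smooth f3 \<Longrightarrow> smooth f4 \<Longrightarrow> smooth (Phi f1 f2 f3 f4)"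
  unfolding smooth_def
proof (intro allI)
  fix k assume a: "\<forall>k. Ck k f1" "\<forall>k. Ck k f2" "\<forall>k. Ck k f3" "\<forall>k. Ck k f4"
  have f: "Ck k f1" "Ck k f2" "Ck k f3" "Ck k f4" using a by auto
  have co: "Ck k (\<lambda>p::real^4. p $ i)" for i by (rule Ck_nth[OF Ck_id])
  show "Ck k (Phi f1 f2 f3 f4)"
    apply (rule Ck_vec, rule Ck_vec)
    subgoal for i j
      unfolding Phi_def forall_3
      using exhaust_3[of i] exhaust_3[of j]
      apply (elim disjE; simp)
      by (intro Ck_add Ck_diff Ck_mult Ck_divc Ck_const co f)+
    done
qed
theorem lemma7p4:
  shows "strongly_tangential =
    {V. \<exists>f1 f2 f3 f4 :: real^4 \<Rightarrow> real.
          smooth f1 \<and> smooth f2 \<and> smooth f3 \<and> smooth f4 \<and>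
          (\<forall>p. V p = f1 p *\<^sub>R v1 p + f2 p *\<^sub>R v2 p + f3 p *\<^sub>R v3 p + f4 p *\<^sub>R v4 p)}"
proof (intro equalityI subsetI)
  fix V assume "V \<in> strongly_tangential"
  then obtain \<phi> where s: "smooth \<phi>" and t: "\<forall>p. alpha \<phi> p \<in> sR_tangent"
    and v: "\<forall>p. V p = tcoords (alpha \<phi> p)"
    unfolding strongly_tangential_def by blast
  have sk: "Ck k \<phi>" for k using s unfolding smooth_def by blast
  have ek: "Ck k (\<lambda>p. \<phi> p $ i $ j)" for k i j
    by (rule Ck_nth[OF Ck_nth[OF sk]])
  have e: "smooth (\<lambda>p. \<phi> p $ i $ j)" for i j
    unfolding smooth_def using ek by blast
  have "Ck k (\<lambda>p. \<phi> p $ 1 $ 1 - \<phi> p $ 3 $ 3)" for k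
    by (rule Ck_diff[OF ek ek])
  then have "smooth (\<lambda>p. \<phi> p $ 1 $ 1 - \<phi> p $ 3 $ 3)"
    unfolding smooth_def by blast
  moreover have "Ck k (\<lambda>p. 3 * \<phi> p $ 1 $ 2)" for k
    by (rule Ck_mult[OF Ck_const ek])
  then have "smooth (\<lambda>p. 3 * \<phi> p $ 1 $ 2)"
    unfolding smooth_def by blast
  moreover have "\<forall>p. V p = (\<phi> p$1$1 - \<phi> p$3$3) *\<^sub>R v1 p + (3 * \<phi> p$1$2) *\<^sub>R v2 p
     + (\<phi> p$1$3) *\<^sub>R v3 p + (\<phi> p$3$2) *\<^sub>R v4 p"
    using v t fwd by simp
  ultimately show "V \<in> {V. \<exists>f1 f2 f3 f4 :: real^4 \<Rightarrow> real.
          smooth f1 \<and> smooth f2 \<and> smooth f3 \<and> smooth f4 \<and>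
          (\<forall>p. V p = f1 p *\<^sub>R v1 p + f2 p *\<^sub>R v2 p + f3 p *\<^sub>R v3 p + f4 p *\<^sub>R v4 p)}"
    using e by (intro CollectI exI conjI) assumption+
next
  fix V assume "V \<in> {V. \<exists>f1 f2 f3 f4 :: real^4 \<Rightarrow> real.
          smooth f1 \<and> smooth f2 \<and> smooth f3 \<and> smooth f4 \<and>
          (\<forall>p. V p = f1 p *\<^sub>R v1 p + f2 p *\<^sub>R v2 p + f3 p *\<^sub>R v3 p + f4 p *\<^sub>R v4 p)}"
  then obtain f1 f2 f3 f4 where f: "smooth f1" "smooth f2" "smooth f3" "smooth f4"
    and v: "\<forall>p. V p = f1 p *\<^sub>R v1 p + f2 p *\<^sub>R v2 p + f3 p *\<^sub>R v3 p + f4 p *\<^sub>R v4 p"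
    by blast
  show "V \<in> strongly_tangential"
    unfolding strongly_tangential_def
    using Phi_smooth[OF f] Phi_tan Phi_eq v by (intro CollectI exI[of _ "Phi f1 f2 f3 f4"]) simp
qed
end
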